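(* Let $f$ be a complex-valued harmonic function in a bounded open set $R\subset\mathbb{C}$. Suppose that $P=\operatorname{int}(\overline{R})\setminus R$ is empty or consists of finitely many poles of $f$, and suppose that $f$ extends continuously to $\partial R\setminus P$. Then $f(S)\cup f(\partial R\setminus P)$ partitions $\mathbb{C}$ into regions of constant valence: on each connected component of $\mathbb{C}\setminus(f(S)\cup f(\partial R\setminus P))$, the number of distinct $z\in R$ with $f(z)=w$ is constant.
   Context: Writing $f=u+iv$, $J_f=u_xv_y-u_yv_x$ and $S=\{z\in R: J_f(z)=0\}$. A point $\alpha$ is a pole of $f$ if $f$ is harmonic in $\{z:0<|z-\alpha|<r\}$ for some $r>0$ and $\lim_{z\to\alpha}|f(z)|=\infty$. $f(\partial R\setminus P)$ denotes the image under the continuous extension. *)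

theory Defs
  imports "HOL-Analysis.Analysis"
begin

definition dx :: "(complex \<Rightarrow> complex) \<Rightarrow> complex \<Rightarrow> complex" where
  "dx f z = vector_derivative (\<lambda>t::real. f (z + of_real t)) (at 0)"

definition dy :: "(complex \<Rightarrow> complex) \<Rightarrow> complex \<Rightarrow> complex" where
  "dy f z = vector_derivative (\<lambda>t::real. f (z + \<i> * of_real t)) (at 0)"

definition C2_on :: "complex set \<Rightarrow> (complex \<Rightarrow> complex) \<Rightarrow> bool" where
  "C2_on A f \<longleftrightarrow>
     (\<forall>z\<in>A. f differentiable (at z)) \<and>
     (\<forall>z\<in>A. dx f differentiable (at z) \<and> dy f differentiable (at z)) \<and>
     continuous_on A (dx (dx f)) \<and> continuous_on A (dx (dy f)) \<and>
     continuous_on A (dy (dx f)) \<and> continuous_on A (dy (dy f))"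

definition harmonic_on :: "complex set \<Rightarrow> (complex \<Rightarrow> complex) \<Rightarrow> bool" where
  "harmonic_on A f \<longleftrightarrow> open A \<and> C2_on A f \<and>
     (\<forall>z\<in>A. dx (dx f) z + dy (dy f) z = 0)"

definition jacobian :: "(complex \<Rightarrow> complex) \<Rightarrow> complex \<Rightarrow> real" where
  "jacobian f z = Re (dx f z) * Im (dy f z) - Re (dy f z) * Im (dx f z)"

definition is_harmonic_pole :: "(complex \<Rightarrow> complex) \<Rightarrow> complex \<Rightarrow> bool" where
  "is_harmonic_pole f \<alpha> \<longleftrightarrow>
     (\<exists>r>0. harmonic_on (ball \<alpha> r - {\<alpha>}) f) \<and> filterlim (\<lambda>z. norm (f z)) at_top (at \<alpha>)"

end

theory Submission
  imports Defs
begin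

lemma dx_eq:
  assumes "(f has_derivative f') (at z)"
  shows "dx f z = f' 1"
proof -
  have lin: "linear f'" using assms has_derivative_linear by blast
  have g: "((\<lambda>t::real. z + of_real t) has_derivative (\<lambda>t. of_real t)) (at 0)"
    by (auto intro!: derivative_eq_intros)
  have a: "(f has_derivative f') (at ((\<lambda>t::real. z + of_real t) 0))" using assms by simp
  have "((\<lambda>t::real. f (z + of_real t)) has_derivative (\<lambda>t. f' (of_real t))) (at 0)"
    using has_derivative_compose[OF g a] by (simp add: o_def)
  moreover have "(\<lambda>t::real. f' (of_real t)) = (\<lambda>t. t *\<^sub>R f' 1)"
  proof
    fix t :: real
    have "f' (of_real t) = f' (t *\<^sub>R 1)" by (simp add: scaleR_conv_of_real)
    also have "\<dots> = t *\<^sub>R f' 1" using lin by (simp add: linear_scale)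
    finally show "f' (of_real t) = t *\<^sub>R f' 1" .
  qed
  ultimately have "((\<lambda>t::real. f (z + of_real t)) has_vector_derivative f' 1) (at 0)"
    by (simp add: has_vector_derivative_def)
  then show ?thesis unfolding dx_def by (rule vector_derivative_at)
qed

lemma dy_eq:
  assumes "(f has_derivative f') (at z)"
  shows "dy f z = f' \<i>"
proof -
  have lin: "linear f'" using assms has_derivative_linear by blast
  have g: "((\<lambda>t::real. z + \<i> * of_real t) has_derivative (\<lambda>t. \<i> * of_real t)) (at 0)"
    by (auto intro!: derivative_eq_intros)
  have a: "(f has_derivative f') (at ((\<lambda>t::real. z + \<i> * of_real t) 0))" using assms by simp
  have "((\<lambda>t::real. f (z + \<i> * of_real t)) has_derivative (\<lambda>t. f' (\<i> * of_real t))) (at 0)"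
    using has_derivative_compose[OF g a] by (simp add: o_def)
  moreover have "(\<lambda>t::real. f' (\<i> * of_real t)) = (\<lambda>t. t *\<^sub>R f' \<i>)"
  proof
    fix t :: real
    have "f' (\<i> * of_real t) = f' (t *\<^sub>R \<i>)" by (simp add: scaleR_conv_of_real mult.commute)
    also have "\<dots> = t *\<^sub>R f' \<i>" using lin by (simp add: linear_scale)
    finally show "f' (\<i> * of_real t) = t *\<^sub>R f' \<i>" .
  qed
  ultimately have "((\<lambda>t::real. f (z + \<i> * of_real t)) has_vector_derivative f' \<i>) (at 0)"
    by (simp add: has_vector_derivative_def)
  then show ?thesis unfolding dy_def by (rule vector_derivative_at)
qed

lemma deriv_form:
  assumes "(f has_derivative f') (at z)"
  shows "f' = (\<lambda>h. Re h *\<^sub>R dx f z + Im h *\<^sub>R dy f z)"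
proof
  fix h :: complex
  have lin: "linear f'" using assms has_derivative_linear by blast
  have "h = Re h *\<^sub>R 1 + Im h *\<^sub>R \<i>" by (simp add: complex_eq_iff)
  then have "f' h = f' (Re h *\<^sub>R 1 + Im h *\<^sub>R \<i>)" by simp
  also have "\<dots> = Re h *\<^sub>R f' 1 + Im h *\<^sub>R f' \<i>" using lin by (simp add: linear_add linear_scale)
  finally show "f' h = Re h *\<^sub>R dx f z + Im h *\<^sub>R dy f z"
    using dx_eq[OF assms] dy_eq[OF assms] by simp
qed

lemma lin2:
  fixes x y a b c d :: real
  assumes "x*a + y*b = 0" "x*c + y*d = 0" "a*d - b*c \<noteq> 0"
  shows "x = 0 \<and> y = 0"
proof -
  have "x*(a*d-b*c) = d*(x*a+y*b) - b*(x*c+y*d)" by (simp add: algebra_simps)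
  then have 1: "x = 0" using assms by simp
  have "y*(a*d-b*c) = a*(x*c+y*d) - c*(x*a+y*b)" by (simp add: algebra_simps)
  then have 2: "y = 0" using assms by simp
  show ?thesis using 1 2 by simp
qed

lemma local_inj:
  assumes h: "harmonic_on R f" and z: "z \<in> R" and J: "jacobian f z \<noteq> 0"
  obtains r where "r > 0" "ball z r \<subseteq> R" "inj_on f (ball z r)"
proof -
  have openR: "open R" using h unfolding harmonic_on_def by blast
  have C2: "C2_on R f" using h unfolding harmonic_on_def by blast
  define D where "D = (\<lambda>x h. Re h *\<^sub>R dx f x + Im h *\<^sub>R dy f x)"
  have derf: "(f has_derivative D x) (at x)" if "x \<in> R" for x
  proof -
    have "f differentiable (at x)" using C2 that unfolding C2_on_def by blast
    then obtain f' where f': "(f has_derivative f') (at x)"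
      unfolding differentiable_def by blast
    have "f' = D x" unfolding D_def by (rule deriv_form[OF f'])
    then show ?thesis using f' by simp
  qed
  have lin: "linear (D z)" using derf[OF z] has_derivative_linear by blast
  have inj: "inj (D z)"
  proof (rule injI)
    fix h1 h2 assume eq: "D z h1 = D z h2"
    let ?x = "Re h1 - Re h2" and ?y = "Im h1 - Im h2"
    have e1: "?x * Re (dx f z) + ?y * Re (dy f z) = 0"
      using arg_cong[OF eq, of Re] unfolding D_def by (simp add: algebra_simps)
    have e2: "?x * Im (dx f z) + ?y * Im (dy f z) = 0"
      using arg_cong[OF eq, of Im] unfolding D_def by (simp add: algebra_simps)
    have "Re (dx f z) * Im (dy f z) - Re (dy f z) * Im (dx f z) \<noteq> 0"
      using J unfolding jacobian_def by simp
    then have "?x = 0 \<and> ?y = 0" using lin2[OF e1 e2] by simp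
    then show "h1 = h2" by (simp add: complex_eq_iff)
  qed
  obtain g where g: "linear g" "g \<circ> D z = id"
    using linear_injective_left_inverse[OF lin inj] by blast
  have bl: "bounded_linear g" using g(1) linear_conv_bounded_linear by blast
  have cdx: "continuous (at z) (dx f)" and cdy: "continuous (at z) (dy f)"
  proof -
    have "dx f differentiable (at z)" "dy f differentiable (at z)" using C2 z unfolding C2_on_def by auto
    then show "continuous (at z) (dx f)" "continuous (at z) (dy f)"
      using differentiable_imp_continuous_within by blast+
  qed
  have on: "\<exists>d>0. \<forall>x. dist z x < d \<longrightarrow> onorm (\<lambda>v. D x v - D z v) < e" if e: "e > 0" for e
  proof -
    obtain d1 where d1: "d1 > 0" "\<forall>x. dist x z < d1 \<longrightarrow> dist (dx f x) (dx f z) < e/2"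
      using cdx[unfolded continuous_at_eps_delta, rule_format, of "e/2"] e by auto
    obtain d2 where d2: "d2 > 0" "\<forall>x. dist x z < d2 \<longrightarrow> dist (dy f x) (dy f z) < e/2"
      using cdy[unfolded continuous_at_eps_delta, rule_format, of "e/2"] e by auto
    show ?thesis
    proof (intro exI conjI allI impI)
      show "min d1 d2 > 0" using d1 d2 by simp
      fix x assume "dist z x < min d1 d2"
      then have a1: "norm (dx f x - dx f z) < e/2" and a2: "norm (dy f x - dy f z) < e/2"
        using d1 d2 by (auto simp: dist_commute dist_norm)
      have "onorm (\<lambda>v. D x v - D z v) \<le> norm (dx f x - dx f z) + norm (dy f x - dy f z)"
      proof (rule onorm_le)
        fix v :: complex
        have "D x v - D z v = Re v *\<^sub>R (dx f x - dx f z) + Im v *\<^sub>R (dy f x - dy f z)"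
          unfolding D_def by (simp add: algebra_simps)
        also have "norm \<dots> \<le> \<bar>Re v\<bar> * norm (dx f x - dx f z) + \<bar>Im v\<bar> * norm (dy f x - dy f z)"
          by (rule order_trans[OF norm_triangle_ineq]) simp
        also have "\<dots> \<le> norm v * norm (dx f x - dx f z) + norm v * norm (dy f x - dy f z)"
          by (intro add_mono mult_right_mono abs_Re_le_cmod abs_Im_le_cmod) auto
        finally show "norm (D x v - D z v) \<le> (norm (dx f x - dx f z) + norm (dy f x - dy f z)) * norm v"
          by (simp add: algebra_simps)
      qed
      then show "onorm (\<lambda>v. D x v - D z v) < e" using a1 a2 by simp
    qed
  qed
  obtain r where "r > 0" "ball z r \<subseteq> R" "inj_on f (ball z r)"
    using has_derivative_locally_injective[OF z openR bl g(2) derf on] by blast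
  then show ?thesis using that by blast
qed


lemma harm_cont: "harmonic_on R f \<Longrightarrow> continuous_on R f"
proof -
  assume h: "harmonic_on R f"
  have "\<forall>z\<in>R. f differentiable (at z)" using h unfolding harmonic_on_def C2_on_def by blast
  then show "continuous_on R f"
    by (simp add: continuous_at_imp_continuous_on differentiable_imp_continuous_within)
qed

lemma sep:
  fixes f :: "complex \<Rightarrow> complex"
  assumes openR: "open R"
    and poles: "\<forall>\<alpha> \<in> interior (closure R) - R. is_harmonic_pole f \<alpha>"
    and cont: "continuous_on (R \<union> (frontier R - (interior (closure R) - R))) f"
    and wB: "w \<notin> f ` (frontier R - (interior (closure R) - R))"
    and z: "z \<in> closure R" "z \<notin> {y\<in>R. f y = w}"
  shows "\<exists>N \<delta>. open N \<and> z \<in> N \<and> \<delta> > 0 \<and> (\<forall>y\<in>N\<inter>R. \<delta> \<le> dist (f y) w)"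
proof (cases "z \<in> interior (closure R) - R")
  case True
  then have "filterlim (\<lambda>z. norm (f z)) at_top (at z)"
    using poles unfolding is_harmonic_pole_def by blast
  then have "eventually (\<lambda>y. norm w + 1 \<le> norm (f y)) (at z)"
    by (simp add: filterlim_at_top)
  then obtain N where N: "open N" "z \<in> N" "\<forall>y\<in>N. y \<noteq> z \<longrightarrow> norm w + 1 \<le> norm (f y)"
    unfolding eventually_at_topological by auto
  show ?thesis
  proof (intro exI conjI ballI)
    fix y assume y: "y \<in> N \<inter> R"
    then have "y \<noteq> z" using True by auto
    then have "norm w + 1 \<le> norm (f y)" using N y by auto
    then show "1 \<le> dist (f y) w"
      using norm_triangle_ineq2[of "f y" w] by (simp add: dist_norm)
  qed (use N in auto)
next
  case False
  let ?B = "R \<union> (frontier R - (interior (closure R) - R))"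
  have zRB: "z \<in> ?B" using False z(1) openR by (auto simp: frontier_def interior_open)
  have fzw: "f z \<noteq> w" using z wB zRB by auto
  define e where "e = dist (f z) w / 2"
  have e: "e > 0" using fzw unfolding e_def by simp
  have "continuous (at z within ?B) f"
    using cont zRB continuous_on_eq_continuous_within by blast
  then have "eventually (\<lambda>y. dist (f y) (f z) < e) (at z within ?B)"
    using e unfolding continuous_within tendsto_iff by blast
  then obtain N where N: "open N" "z \<in> N" "\<forall>y\<in>N. y \<in> ?B \<longrightarrow> y \<noteq> z \<longrightarrow> dist (f y) (f z) < e"
    unfolding eventually_at_topological by auto
  show ?thesis
  proof (intro exI conjI ballI)
    fix y assume y: "y \<in> N \<inter> R"
    then have "dist (f y) (f z) < e" using N e by (cases "y = z") auto
    then show "e \<le> dist (f y) w" using e_def dist_triangle[of "f z" w "f y"]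
      by (simp add: dist_commute)
  qed (use N e in auto)
qed

lemma finite_choice_min:
  fixes P :: "'a \<Rightarrow> real \<Rightarrow> bool"
  assumes "finite A" "\<forall>x\<in>A. \<exists>d>0. P x d"
    and mono: "\<And>x d d'. P x d \<Longrightarrow> 0 < d' \<Longrightarrow> d' \<le> d \<Longrightarrow> P x d'"
  shows "\<exists>d>0. \<forall>x\<in>A. P x d"
  using assms(1,2)
proof (induction A rule: finite_induct)
  case empty
  then show ?case by (auto intro: exI[of _ 1])
next
  case (insert a A)
  then obtain d1 where d1: "d1 > 0" "\<forall>x\<in>A. P x d1" by auto
  obtain d2 where d2: "d2 > 0" "P a d2" using insert by auto
  show ?case
    by (rule exI[of _ "min d1 d2"]) (use d1 d2 mono in auto)
qed

lemma uniform:
  fixes f :: "complex \<Rightarrow> complex"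
  assumes openR: "open R" and bdd: "bounded R"
    and poles: "\<forall>\<alpha> \<in> interior (closure R) - R. is_harmonic_pole f \<alpha>"
    and cont: "continuous_on (R \<union> (frontier R - (interior (closure R) - R))) f"
    and wB: "w \<notin> f ` (frontier R - (interior (closure R) - R))"
    and U: "open U" "{y\<in>R. f y = w} \<subseteq> U"
  shows "\<exists>\<delta>>0. \<forall>y\<in>R-U. \<delta> \<le> dist (f y) w"
proof -
  let ?K = "closure R - U"
  have K: "compact ?K" using bdd U(1) compact_diff compact_closure by blast
  have "\<forall>z\<in>?K. \<exists>N \<delta>. open N \<and> z \<in> N \<and> \<delta> > 0 \<and> (\<forall>y\<in>N\<inter>R. \<delta> \<le> dist (f y) w)"
  proof
    fix z assume "z \<in> ?K"
    then show "\<exists>N \<delta>. open N \<and> z \<in> N \<and> \<delta> > 0 \<and> (\<forall>y\<in>N\<inter>R. \<delta> \<le> dist (f y) w)"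
      using sep[OF openR poles cont wB] U(2) by auto
  qed
  then obtain N where N: "\<forall>z\<in>?K. open (N z) \<and> z \<in> N z \<and> (\<exists>\<delta>>0. \<forall>y\<in>N z\<inter>R. \<delta> \<le> dist (f y) w)"
    by metis
  obtain C where C: "C \<subseteq> ?K" "finite C" "?K \<subseteq> (\<Union>c\<in>C. N c)"
    using compactE_image[OF K, of ?K N] N by blast
  have "\<exists>d>0. \<forall>c\<in>C. \<forall>y\<in>N c\<inter>R. d \<le> dist (f y) w"
  proof (rule finite_choice_min[OF C(2)])
    show "\<forall>c\<in>C. \<exists>d>0. \<forall>y\<in>N c \<inter> R. d \<le> dist (f y) w" using C(1) N by blast
  next
    fix c d d' assume "\<forall>y\<in>N c \<inter> R. d \<le> dist (f y) w" "0 < d'" "d' \<le> d"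
    then show "\<forall>y\<in>N c \<inter> R. d' \<le> dist (f y) w" by force
  qed
  then obtain d where d: "d > 0" "\<forall>c\<in>C. \<forall>y\<in>N c\<inter>R. d \<le> dist (f y) w" by blast
  show ?thesis
  proof (intro exI conjI ballI)
    fix y assume y: "y \<in> R - U"
    then have "y \<in> ?K" using closure_subset by blast
    then obtain c where "c \<in> C" "y \<in> N c" using C(3) by blast
    then show "d \<le> dist (f y) w" using d y by blast
  qed (use d in auto)
qed


lemma inj_balls:
  assumes h: "harmonic_on R f" and F: "F \<subseteq> {z\<in>R. jacobian f z \<noteq> 0}"
  obtains r where "\<forall>z\<in>F. r z > 0 \<and> ball z (r z) \<subseteq> R \<and> inj_on f (ball z (r z))"
proof -
  have "\<forall>z\<in>F. \<exists>r. r > 0 \<and> ball z r \<subseteq> R \<and> inj_on f (ball z r)"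
  proof
    fix z assume "z \<in> F"
    then have "z \<in> R" "jacobian f z \<noteq> 0" using F by auto
    then obtain r where "r > 0" "ball z r \<subseteq> R" "inj_on f (ball z r)"
      using local_inj[OF h] by blast
    then show "\<exists>r. r > 0 \<and> ball z r \<subseteq> R \<and> inj_on f (ball z r)" by blast
  qed
  from bchoice[OF this] obtain r where "\<forall>z\<in>F. r z > 0 \<and> ball z (r z) \<subseteq> R \<and> inj_on f (ball z (r z))"
    by auto
  then show ?thesis by (rule that)
qed

lemma fin_fiber:
  fixes f :: "complex \<Rightarrow> complex"
  assumes openR: "open R" and bdd: "bounded R" and h: "harmonic_on R f"
    and poles: "\<forall>\<alpha> \<in> interior (closure R) - R. is_harmonic_pole f \<alpha>"
    and cont: "continuous_on (R \<union> (frontier R - (interior (closure R) - R))) f"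
    and wB: "w \<notin> f ` (frontier R - (interior (closure R) - R))"
    and wS: "w \<notin> f ` {z\<in>R. jacobian f z = 0}"
  shows "finite {y\<in>R. f y = w}"
proof -
  let ?F = "{y\<in>R. f y = w}"
  have "closure ?F \<subseteq> ?F"
  proof
    fix z assume z: "z \<in> closure ?F"
    have zR: "z \<in> closure R" using z closure_mono[of ?F R] by blast
    show "z \<in> ?F"
    proof (rule ccontr)
      assume "z \<notin> ?F"
      then obtain N \<delta> where N: "open N" "z \<in> N" "\<delta> > 0" "\<forall>y\<in>N\<inter>R. \<delta> \<le> dist (f y) w"
        using sep[OF openR poles cont wB zR] by blast
      have "N \<inter> closure ?F \<noteq> {}" using N z by blast
      then have "N \<inter> ?F \<noteq> {}" using open_Int_closure_eq_empty[OF N(1), of ?F] by blast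
      then obtain y where y: "y \<in> N" "y \<in> R" "f y = w" by blast
      then have "\<delta> \<le> dist (f y) w" using N(4) by blast
      then show False using N(3) y(3) by simp
    qed
  qed
  then have "closed ?F" using closure_subset_eq by blast
  moreover have "bounded ?F" using bdd bounded_subset[of R ?F] by blast
  ultimately have cF: "compact ?F" using compact_eq_bounded_closed by blast
  have "?F \<subseteq> {z\<in>R. jacobian f z \<noteq> 0}" using wS by auto
  then obtain r where r: "\<forall>z\<in>?F. r z > 0 \<and> ball z (r z) \<subseteq> R \<and> inj_on f (ball z (r z))"
    using inj_balls[OF h] by blast
  have "?F \<subseteq> (\<Union>z\<in>?F. ball z (r z))" using r by force
  then obtain C where C: "C \<subseteq> ?F" "finite C" "?F \<subseteq> (\<Union>c\<in>C. ball c (r c))"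
    using compactE_image[OF cF, of ?F "\<lambda>z. ball z (r z)"] by blast
  have "?F \<subseteq> C"
  proof
    fix y assume y: "y \<in> ?F"
    then obtain c where c: "c \<in> C" "y \<in> ball c (r c)" using C(3) by blast
    then have "c \<in> ?F" using C(1) by blast
    then have "inj_on f (ball c (r c))" "c \<in> ball c (r c)" using r by auto
    moreover have "f y = f c" using y \<open>c \<in> ?F\<close> by simp
    ultimately have "y = c" using c(2) by (meson inj_onD)
    then show "y \<in> C" using c by simp
  qed
  then show ?thesis using C(2) finite_subset by blast
qed


lemma local_const:
  fixes f :: "complex \<Rightarrow> complex"
  assumes openR: "open R" and bdd: "bounded R" and h: "harmonic_on R f"
    and poles: "\<forall>\<alpha> \<in> interior (closure R) - R. is_harmonic_pole f \<alpha>"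
    and cont: "continuous_on (R \<union> (frontier R - (interior (closure R) - R))) f"
    and wB: "w0 \<notin> f ` (frontier R - (interior (closure R) - R))"
    and wS: "w0 \<notin> f ` {z\<in>R. jacobian f z = 0}"
  shows "\<exists>W. open W \<and> w0 \<in> W \<and> (\<forall>w\<in>W. finite {y\<in>R. f y = w} \<and>
            card {y\<in>R. f y = w} = card {y\<in>R. f y = w0})"
proof -
  let ?F = "{y\<in>R. f y = w0}"
  have finF: "finite ?F" by (rule fin_fiber[OF assms])
  have "?F \<subseteq> {z\<in>R. jacobian f z \<noteq> 0}" using wS by auto
  then obtain r1 where r1: "\<forall>z\<in>?F. r1 z > 0 \<and> ball z (r1 z) \<subseteq> R \<and> inj_on f (ball z (r1 z))"
    using inj_balls[OF h] by blast
  have "\<forall>z\<in>?F. \<exists>d. d > 0 \<and> (\<forall>x\<in>?F. x \<noteq> z \<longrightarrow> d \<le> dist z x)"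
    using finite_set_avoid[OF finF] by blast
  from bchoice[OF this] obtain d where d: "\<forall>z\<in>?F. d z > 0 \<and> (\<forall>x\<in>?F. x \<noteq> z \<longrightarrow> d z \<le> dist z x)"
    by auto
  define r where "r z = min (r1 z) (d z / 2)" for z
  have r: "r z > 0 \<and> ball z (r z) \<subseteq> R \<and> inj_on f (ball z (r z))" if z: "z \<in> ?F" for z
  proof -
    have sub: "ball z (r z) \<subseteq> ball z (r1 z)" unfolding r_def by (rule subset_ball) simp
    have "r z > 0" using r1 d z unfolding r_def by auto
    then show ?thesis using sub r1 z inj_on_subset[of f "ball z (r1 z)" "ball z (r z)"] by blast
  qed
  have disj: "z = z'" if z: "z \<in> ?F" "z' \<in> ?F" "y \<in> ball z (r z)" "y \<in> ball z' (r z')" for z z' y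
  proof (rule ccontr)
    assume ne: "z \<noteq> z'"
    have da: "\<forall>x\<in>?F. x \<noteq> z \<longrightarrow> d z \<le> dist z x" using d z(1) by blast
    have db: "\<forall>x\<in>?F. x \<noteq> z' \<longrightarrow> d z' \<le> dist z' x" using d z(2) by blast
    have ne': "z' \<noteq> z" using ne by simp
    have a: "d z \<le> dist z z'" using da z(2) ne' by blast
    have b: "d z' \<le> dist z' z" using db z(1) ne by blast
    have c: "dist z z' \<le> dist z y + dist y z'" by (rule dist_triangle)
    have e1: "dist y z' = dist z' y" "dist z' z = dist z z'" by (rule dist_commute)+
    have "r z \<le> d z / 2" "r z' \<le> d z' / 2" unfolding r_def by auto
    moreover have "dist z y < r z" "dist z' y < r z'" using z(3,4) by auto
    ultimately show False using a b c e1 by linarith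
  qed
  have contR: "continuous_on R f" by (rule harm_cont[OF h])
  have V: "open (f ` ball z (r z))" if z: "z \<in> ?F" for z
  proof (rule invariance_of_domain)
    show "continuous_on (ball z (r z)) f" using contR r[OF z] continuous_on_subset by blast
    show "inj_on f (ball z (r z))" using r[OF z] by blast
  qed simp
  define U where "U = (\<Union>z\<in>?F. ball z (r z))"
  have oU: "open U" unfolding U_def by blast
  have FU: "?F \<subseteq> U" unfolding U_def using r by force
  obtain \<delta> where \<delta>: "\<delta> > 0" "\<forall>y\<in>R-U. \<delta> \<le> dist (f y) w0"
    using uniform[OF openR bdd poles cont wB oU FU] by blast
  define W where "W = ball w0 \<delta> \<inter> (\<Inter>z\<in>?F. f ` ball z (r z))"
  have oW: "open W" unfolding W_def using finF V by (intro open_Int open_INT) auto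
  have w0W: "w0 \<in> W"
  proof -
    have "w0 \<in> f ` ball z (r z)" if z: "z \<in> ?F" for z
    proof -
      have "z \<in> ball z (r z)" using r[OF z] by simp
      moreover have "f z = w0" using z by simp
      ultimately show ?thesis by (metis imageI)
    qed
    then show ?thesis unfolding W_def using \<delta>(1) by auto
  qed
  have main: "finite {y\<in>R. f y = w} \<and> card {y\<in>R. f y = w} = card ?F" if w: "w \<in> W" for w
  proof -
    define g where "g z = inv_into (ball z (r z)) f w" for z
    have g: "g z \<in> ball z (r z) \<and> f (g z) = w" if z: "z \<in> ?F" for z
    proof -
      have "w \<in> f ` ball z (r z)" using w z unfolding W_def by blast
      then show ?thesis unfolding g_def
        using inv_into_into[of w f "ball z (r z)"] f_inv_into_f[of w f "ball z (r z)"] by blast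
    qed
    have bij: "bij_betw g ?F {y\<in>R. f y = w}"
      unfolding bij_betw_def
    proof (intro conjI)
      show "inj_on g ?F"
      proof (rule inj_onI)
        fix z z' assume z: "z \<in> ?F" "z' \<in> ?F" "g z = g z'"
        have "g z \<in> ball z (r z)" using g[OF z(1)] by blast
        moreover have "g z \<in> ball z' (r z')" using g[OF z(2)] z(3) by simp
        ultimately show "z = z'" by (rule disj[OF z(1,2)])
      qed
      show "g ` ?F = {y\<in>R. f y = w}"
      proof
        show "g ` ?F \<subseteq> {y\<in>R. f y = w}"
        proof
          fix y assume "y \<in> g ` ?F"
          then obtain z where z: "z \<in> ?F" "y = g z" by blast
          have "g z \<in> ball z (r z)" "f (g z) = w" using g[OF z(1)] by blast+
          moreover have "ball z (r z) \<subseteq> R" using r[OF z(1)] by blast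
          ultimately show "y \<in> {y\<in>R. f y = w}" using z(2) by blast
        qed
      next
        show "{y\<in>R. f y = w} \<subseteq> g ` ?F"
        proof
          fix y assume y: "y \<in> {y\<in>R. f y = w}"
          have "w \<in> ball w0 \<delta>" using w unfolding W_def by blast
          then have "dist w0 w < \<delta>" by simp
          then have dw: "dist w w0 < \<delta>" by (simp add: dist_commute)
          have "y \<in> U"
          proof (rule ccontr)
            assume "y \<notin> U"
            then have "\<delta> \<le> dist (f y) w0" using y \<delta>(2) by blast
            moreover have "f y = w" using y by blast
            ultimately show False using dw by simp
          qed
          then obtain z where z: "z \<in> ?F" "y \<in> ball z (r z)" unfolding U_def by blast
          have "f y = f (g z)" using y g[OF z(1)] by simp
          moreover have "g z \<in> ball z (r z)" using g[OF z(1)] by blast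
          ultimately have "y = g z" using r[OF z(1)] z(2) by (meson inj_onD)
          then show "y \<in> g ` ?F" using z(1) by blast
        qed
      qed
    qed
    show ?thesis using bij_betw_finite[OF bij] bij_betw_same_card[OF bij] finF by simp
  qed
  show ?thesis using oW w0W main by blast
qed

theorem corollary4p13:
  fixes f :: "complex \<Rightarrow> complex" and R :: "complex set"
  assumes "open R" and "bounded R"
    and "harmonic_on R f"
    and "finite (interior (closure R) - R)"
    and "\<forall>\<alpha> \<in> interior (closure R) - R. is_harmonic_pole f \<alpha>"
    and "continuous_on (R \<union> (frontier R - (interior (closure R) - R))) f"
  shows "\<forall>C \<in> components (- (f ` {z\<in>R. jacobian f z = 0}
                                \<union> f ` (frontier R - (interior (closure R) - R)))).
           \<forall>w\<in>C. \<forall>w'\<in>C.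
             (finite {z\<in>R. f z = w} \<longleftrightarrow> finite {z\<in>R. f z = w'}) \<and>
             card {z\<in>R. f z = w} = card {z\<in>R. f z = w'}"
proof (intro ballI)
  fix C w w'
  assume C: "C \<in> components (- (f ` {z\<in>R. jacobian f z = 0}
                                \<union> f ` (frontier R - (interior (closure R) - R))))"
    and w: "w \<in> C" and w': "w' \<in> C"
  have sub: "C \<subseteq> - (f ` {z\<in>R. jacobian f z = 0} \<union> f ` (frontier R - (interior (closure R) - R)))"
    using C in_components_subset by blast
  have conn: "connected C" using C in_components_connected by blast
  have loc: "\<exists>W. open W \<and> a \<in> W \<and> (\<forall>v\<in>W. finite {y\<in>R. f y = v} \<and>
            card {y\<in>R. f y = v} = card {y\<in>R. f y = a})" if a: "a \<in> C" for a
  proof (rule local_const[OF assms(1,2,3,5,6)])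
    show "a \<notin> f ` (frontier R - (interior (closure R) - R))" using sub a by blast
    show "a \<notin> f ` {z\<in>R. jacobian f z = 0}" using sub a by blast
  qed
  have fin: "finite {y\<in>R. f y = a}" if a: "a \<in> C" for a
    using loc[OF a] by blast
  have "(\<lambda>v. card {y\<in>R. f y = v}) constant_on C"
  proof (rule locally_constant_imp_constant[OF conn])
    fix a assume a: "a \<in> C"
    then obtain W where W: "open W" "a \<in> W" "\<forall>v\<in>W. card {y\<in>R. f y = v} = card {y\<in>R. f y = a}"
      using loc[OF a] by blast
    show "\<exists>T. openin (top_of_set C) T \<and> a \<in> T \<and> (\<forall>x\<in>T. card {y\<in>R. f y = x} = card {y\<in>R. f y = a})"
    proof (intro exI conjI)
      show "openin (top_of_set C) (C \<inter> W)" using W(1) by (rule openin_open_Int)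
      show "a \<in> C \<inter> W" using a W(2) by blast
      show "\<forall>x\<in>C \<inter> W. card {y\<in>R. f y = x} = card {y\<in>R. f y = a}" using W(3) by blast
    qed
  qed
  then have "card {z\<in>R. f z = w} = card {z\<in>R. f z = w'}"
  proof -
    obtain c where "\<forall>x\<in>C. card {y\<in>R. f y = x} = c"
      using \<open>(\<lambda>v. card {y\<in>R. f y = v}) constant_on C\<close> unfolding constant_on_def by blast
    then show ?thesis using w w' by simp
  qed
  then show "(finite {z\<in>R. f z = w} \<longleftrightarrow> finite {z\<in>R. f z = w'}) \<and>
             card {z\<in>R. f z = w} = card {z\<in>R. f z = w'}"
    using fin w w' by blast
qed

end
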